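(* Let $R$ be a finite local Frobenius ring which is not a field, of odd characteristic, in which $3$ is a unit, and fix a primitive additive character $\psi$ of $R$. Then for every non-primitive multiplicative character $\tau$ of $R$, $$\sum_{a\in R^\times}K_\tau(a)^3=0.$$
   Context: All rings are finite and commutative with identity; $R^\times$ is the unit group; $M$ is the maximal ideal of the local ring $R$. An additive character $(R,+)\to\mathbb{C}^*$ is primitive if the only ideal on which it is identically $1$ is $(0)$; $R$ is Frobenius if such a character exists. A multiplicative character is a homomorphism $R^\times\to\mathbb{C}^*$; its conductor is $R$ if it is trivial, and otherwise the largest ideal $I\subseteq M$ such that it is identically $1$ on $1+I$; it is primitive if its conductor is $(0)$. $K_\tau(a)=\sum_{u\in R^\times}\tau(u)\psi(u+au^{-1})$. Odd characteristic means $R/M$ has odd characteristic. *)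

theory Defs
  imports Complex_Main
begin

definition ring_units :: "'a::comm_ring_1 set" where
  "ring_units = {u. \<exists>v. u * v = 1}"

definition ring_inv :: "'a::comm_ring_1 \<Rightarrow> 'a" where
  "ring_inv u = (THE v. u * v = 1)"

definition is_ideal :: "'a::comm_ring_1 set \<Rightarrow> bool" where
  "is_ideal I \<longleftrightarrow> 0 \<in> I \<and> (\<forall>x\<in>I. \<forall>y\<in>I. x + y \<in> I) \<and> (\<forall>r. \<forall>x\<in>I. r * x \<in> I)"

definition is_maximal_ideal :: "'a::comm_ring_1 set \<Rightarrow> bool" where
  "is_maximal_ideal M \<longleftrightarrow> is_ideal M \<and> M \<noteq> UNIV \<and>
     (\<forall>J. is_ideal J \<and> M \<subseteq> J \<longrightarrow> J = M \<or> J = UNIV)"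

definition local_ring :: "'a::comm_ring_1 itself \<Rightarrow> bool" where
  "local_ring _ \<longleftrightarrow> (\<exists>!M::'a set. is_maximal_ideal M)"

definition max_ideal :: "'a::comm_ring_1 set" where
  "max_ideal = (THE M. is_maximal_ideal M)"

definition is_field_ring :: "'a::comm_ring_1 itself \<Rightarrow> bool" where
  "is_field_ring _ \<longleftrightarrow> (\<forall>x::'a. x \<noteq> 0 \<longrightarrow> x \<in> ring_units)"

text \<open>Characteristic of the residue field R/M: least positive n with n*1 in M.\<close>
definition residue_char :: "'a::comm_ring_1 itself \<Rightarrow> nat" where
  "residue_char _ = (LEAST n. n > 0 \<and> (of_nat n :: 'a) \<in> max_ideal)"

definition additive_character :: "('a::comm_ring_1 \<Rightarrow> complex) \<Rightarrow> bool" where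
  "additive_character \<psi> \<longleftrightarrow> (\<forall>x. \<psi> x \<noteq> 0) \<and> (\<forall>x y. \<psi> (x + y) = \<psi> x * \<psi> y)"

definition primitive_additive_character :: "('a::comm_ring_1 \<Rightarrow> complex) \<Rightarrow> bool" where
  "primitive_additive_character \<psi> \<longleftrightarrow> additive_character \<psi> \<and>
     (\<forall>I. is_ideal I \<and> (\<forall>x\<in>I. \<psi> x = 1) \<longrightarrow> I = {0})"

definition frobenius_ring :: "'a::comm_ring_1 itself \<Rightarrow> bool" where
  "frobenius_ring _ \<longleftrightarrow> (\<exists>\<psi>::'a \<Rightarrow> complex. primitive_additive_character \<psi>)"

text \<open>A multiplicative character is a homomorphism R^x -> C^*; only its values on units matter.\<close>
definition mult_character :: "('a::comm_ring_1 \<Rightarrow> complex) \<Rightarrow> bool" where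
  "mult_character \<tau> \<longleftrightarrow> (\<forall>u\<in>ring_units. \<tau> u \<noteq> 0) \<and>
     (\<forall>u\<in>ring_units. \<forall>v\<in>ring_units. \<tau> (u * v) = \<tau> u * \<tau> v)"

definition conductor :: "('a::comm_ring_1 \<Rightarrow> complex) \<Rightarrow> 'a set" where
  "conductor \<tau> = (if (\<forall>u\<in>ring_units. \<tau> u = 1) then UNIV
     else (THE I. is_ideal I \<and> I \<subseteq> max_ideal \<and> (\<forall>x\<in>I. \<tau> (1 + x) = 1) \<and>
            (\<forall>J. is_ideal J \<and> J \<subseteq> max_ideal \<and> (\<forall>x\<in>J. \<tau> (1 + x) = 1) \<longrightarrow> J \<subseteq> I)))"

definition primitive_mult_character :: "('a::comm_ring_1 \<Rightarrow> complex) \<Rightarrow> bool" where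
  "primitive_mult_character \<tau> \<longleftrightarrow> mult_character \<tau> \<and> conductor \<tau> = {0}"

definition kloosterman :: "('a::comm_ring_1 \<Rightarrow> complex) \<Rightarrow> ('a \<Rightarrow> complex) \<Rightarrow> 'a \<Rightarrow> complex" where
  "kloosterman \<tau> \<psi> a = (\<Sum>u\<in>ring_units. \<tau> u * \<psi> (u + a * ring_inv u))"

end

theory Submission
  imports Defs
begin


lemma unitI: "(u::'a::comm_ring_1) * v = 1 \<Longrightarrow> u \<in> ring_units"
  by (auto simp: ring_units_def)

lemma one_unit: "(1::'a::comm_ring_1) \<in> ring_units" by (rule unitI[of 1 1]) simp

lemma unit_mult: "(u::'a::comm_ring_1) \<in> ring_units \<Longrightarrow> v \<in> ring_units \<Longrightarrow> u*v \<in> ring_units"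
proof -
  assume "u \<in> ring_units" "v \<in> ring_units"
  then obtain a b where "u*a = 1" "v*b = 1" by (auto simp: ring_units_def)
  then have "(u*v)*(a*b) = 1" by (metis mult.left_commute mult.assoc mult_1_right)
  then show ?thesis by (rule unitI)
qed

lemma nonunit_mult: "(x::'a::comm_ring_1) \<notin> ring_units \<Longrightarrow> r*x \<notin> ring_units"
proof
  assume "x \<notin> ring_units" "r*x \<in> ring_units"
  then obtain a where "(r*x)*a = 1" by (auto simp: ring_units_def)
  then have "x*(r*a) = 1" by (simp add: ac_simps)
  then show False using \<open>x \<notin> ring_units\<close> unitI by blast
qed

lemma ring_inv_eq: "(u::'a::comm_ring_1) * v = 1 \<Longrightarrow> ring_inv u = v"
  unfolding ring_inv_def
proof (rule the_equality)
  fix w assume "u*v = 1" "u*w = 1"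
  then have "w = w*(u*v)" by simp
  also have "\<dots> = v*(u*w)" by (simp add: ac_simps)
  finally show "w = v" using \<open>u*w=1\<close> by simp
qed

lemma ring_inv_unit: "(u::'a::comm_ring_1) \<in> ring_units \<Longrightarrow> u * ring_inv u = 1"
  unfolding ring_units_def using ring_inv_eq by fastforce

lemma ring_inv_in: "(u::'a::comm_ring_1) \<in> ring_units \<Longrightarrow> ring_inv u \<in> ring_units"
  using ring_inv_unit[of u] unitI[of "ring_inv u" u] by (simp add: mult.commute)

lemma maximal_exists:
  assumes "is_ideal (I::'a::{comm_ring_1,finite} set)" "I \<noteq> UNIV"
  shows "\<exists>M. is_maximal_ideal M \<and> I \<subseteq> M"
proof -
  let ?P = "\<lambda>J::'a set. is_ideal J \<and> I \<subseteq> J \<and> J \<noteq> UNIV"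
  let ?m = "\<lambda>J::'a set. card (UNIV::'a set) - card J"
  have "?P I" using assms by simp
  then obtain J where J: "?P J" and le: "\<And>K. ?P K \<Longrightarrow> ?m J \<le> ?m K"
    using ex_has_least_nat[of ?P I ?m] by blast
  have "is_maximal_ideal J"
    unfolding is_maximal_ideal_def
  proof (intro conjI allI impI)
    fix K assume K: "is_ideal K \<and> J \<subseteq> K"
    show "K = J \<or> K = UNIV"
    proof (cases "K = UNIV")
      case False
      then have "?P K" using K J by blast
      then have "?m J \<le> ?m K" by (rule le)
      moreover have "card K \<le> card (UNIV::'a set)" by (rule card_mono) simp_all
      moreover have "card J \<le> card K" using K by (intro card_mono) simp_all
      ultimately have "card K = card J" by linarith
      then have "J = K" using K by (intro card_subset_eq) simp_all
      then show ?thesis by simp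
    qed simp
  qed (use J in simp_all)
  then show ?thesis using J by blast
qed

lemma ideal_no_unit:
  assumes "is_ideal M" "M \<noteq> UNIV" "(u::'a::comm_ring_1) \<in> M" shows "u \<notin> ring_units"
proof
  assume "u \<in> ring_units"
  then obtain v where v: "u*v = 1" by (auto simp: ring_units_def)
  have "\<And>r. r \<in> M" proof -
    fix r have "(r*v)*u \<in> M" using assms unfolding is_ideal_def by blast
    moreover have "(r*v)*u = r" using v by (simp add: ac_simps)
    ultimately show "r \<in> M" by simp
  qed
  then show False using assms(2) by blast
qed

lemma local_max_ideal:
  assumes "local_ring TYPE('a::{comm_ring_1,finite})"
  shows "max_ideal = {x::'a. x \<notin> ring_units}"
proof -
  have "\<exists>!M::'a set. is_maximal_ideal M" using assms by (simp add: local_ring_def)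
  then obtain M :: "'a set" where M: "is_maximal_ideal M" and uniq0: "\<forall>M'. is_maximal_ideal M' \<longrightarrow> M' = M"
    by (rule ex1E)
  have uniq: "\<And>M'. is_maximal_ideal M' \<Longrightarrow> M' = M" using uniq0 by simp
  have mi: "max_ideal = M" unfolding max_ideal_def using M uniq by (rule the_equality)
  have "M = {x. x \<notin> ring_units}"
  proof
    show "M \<subseteq> {x. x \<notin> ring_units}"
    proof
      fix x assume "x \<in> M"
      moreover have "is_ideal M" "M \<noteq> UNIV" using M unfolding is_maximal_ideal_def by simp_all
      ultimately show "x \<in> {x. x \<notin> ring_units}" using ideal_no_unit by blast
    qed
    show "{x. x \<notin> ring_units} \<subseteq> M"
    proof
      fix x :: 'a assume "x \<in> {x. x \<notin> ring_units}"
      then have xn: "x \<notin> ring_units" by simp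
      let ?I = "range (\<lambda>r. r*x)"
      have "is_ideal ?I" unfolding is_ideal_def
      proof (intro conjI ballI allI)
        have "0 = 0 * x" by simp
        then show "0 \<in> ?I" by blast
        fix a b assume "a \<in> ?I" "b \<in> ?I"
        then obtain r r' where "a = r*x" "b = r'*x" by blast
        then have "a + b = (r+r')*x" by (simp add: distrib_right)
        then show "a + b \<in> ?I" by blast
      next
        fix r a assume "a \<in> ?I"
        then obtain r' where "a = r'*x" by blast
        then have "r*a = (r*r')*x" by (simp add: mult.assoc)
        then show "r * a \<in> ?I" by blast
      qed
      moreover have "?I \<noteq> UNIV"
      proof
        assume "?I = UNIV" then have "1 \<in> ?I" by simp
        then obtain r where "1 = r*x" by blast
        then have "x*r = 1" by (simp add: mult.commute)
        then show False using xn unitI by blast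
      qed
      ultimately have "\<exists>M'. is_maximal_ideal M' \<and> ?I \<subseteq> M'" by (rule maximal_exists)
      then obtain M' where M': "is_maximal_ideal M'" "?I \<subseteq> M'" by blast
      have "x = 1*x" by simp
      then have "x \<in> ?I" by blast
      then have "x \<in> M'" using M'(2) by blast
      then show "x \<in> M" using uniq[OF M'(1)] by simp
    qed
  qed
  with mi show ?thesis by simp
qed

lemma local_add:
  assumes "local_ring TYPE('a::{comm_ring_1,finite})" "(x::'a) \<notin> ring_units" "y \<notin> ring_units"
  shows "x + y \<notin> ring_units"
proof -
  have "\<exists>!M::'a set. is_maximal_ideal M" using assms(1) unfolding local_ring_def .
  then obtain M :: "'a set" where M: "is_maximal_ideal M" and uniq0: "\<forall>M'. is_maximal_ideal M' \<longrightarrow> M' = M"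
    by (rule ex1E)
  have mi: "max_ideal = M" unfolding max_ideal_def
  proof (rule the_equality)
    show "is_maximal_ideal M" by (rule M)
    fix M' :: "'a set" assume "is_maximal_ideal M'" then show "M' = M" using uniq0 by blast
  qed
  have eq: "M = {x::'a. x \<notin> ring_units}" using local_max_ideal[OF assms(1)] mi by (simp only:)
  have "is_ideal M" "M \<noteq> UNIV" using M unfolding is_maximal_ideal_def by simp_all
  moreover have "x \<in> M" "y \<in> M" using assms(2,3) by (subst eq, simp)+
  ultimately have "x + y \<in> M" unfolding is_ideal_def by (elim conjE) blast
  then show ?thesis using eq by simp
qed


lemma nonunit_neg: "(x::'a::comm_ring_1) \<notin> ring_units \<Longrightarrow> -x \<notin> ring_units"
  using nonunit_mult[of x "-1"] by simp

lemma local_diff: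
  assumes "local_ring TYPE('a::{comm_ring_1,finite})" "(x::'a) \<notin> ring_units" "y \<notin> ring_units"
  shows "x - y \<notin> ring_units"
  using local_add[OF assms(1) assms(2) nonunit_neg[OF assms(3)]] by simp

lemma local_one_plus:
  assumes "local_ring TYPE('a::{comm_ring_1,finite})" "(y::'a) \<notin> ring_units"
  shows "1 + y \<in> ring_units"
proof (rule ccontr)
  assume "1 + y \<notin> ring_units"
  then have "(1 + y) - y \<notin> ring_units" using local_diff[OF assms(1)] assms(2) by blast
  then show False by (simp add: one_unit)
qed

lemma prod_nonunit: "(x::'a::comm_ring_1) * y \<notin> ring_units \<Longrightarrow> x \<notin> ring_units \<or> y \<notin> ring_units"
  using unit_mult by blast

lemma neg_one_unit: "(-1::'a::comm_ring_1) \<in> ring_units" by (rule unitI[of _ "-1"]) simp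

lemma key_alg:
  assumes L: "local_ring TYPE('a::{comm_ring_1,finite})" and three: "(3::'a) \<in> ring_units"
    and a: "(a::'a) \<in> ring_units" and u: "u \<in> ring_units" and v: "v \<in> ring_units" and w: "w \<in> ring_units"
  shows "u - a * ring_inv u \<in> ring_units \<or> v - a * ring_inv v \<in> ring_units \<or> w - a * ring_inv w \<in> ring_units
     \<or> a * (ring_inv u + ring_inv v + ring_inv w) \<in> ring_units"
proof (rule ccontr)
  assume "\<not> ?thesis"
  then have c1: "u - a * ring_inv u \<notin> ring_units" and c2: "v - a * ring_inv v \<notin> ring_units"
    and c3: "w - a * ring_inv w \<notin> ring_units" and c4: "a * (ring_inv u + ring_inv v + ring_inv w) \<notin> ring_units"
    by auto
  have iu: "u * ring_inv u = 1" using ring_inv_unit[OF u] .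
  have iv: "v * ring_inv v = 1" using ring_inv_unit[OF v] .
  have iw: "w * ring_inv w = 1" using ring_inv_unit[OF w] .
  have ia: "a * ring_inv a = 1" using ring_inv_unit[OF a] .
  have sq: "z * (z - a * ring_inv z) = z*z - a" if "z * ring_inv z = 1" for z
  proof -
    have "z * (z - a * ring_inv z) = z*z - a * (z * ring_inv z)" by (simp add: algebra_simps)
    then show ?thesis using that by simp
  qed
  have s1: "u*u - a \<notin> ring_units" using nonunit_mult[OF c1, of u] sq[OF iu] by simp
  have s2: "v*v - a \<notin> ring_units" using nonunit_mult[OF c2, of v] sq[OF iv] by simp
  have s3: "w*w - a \<notin> ring_units" using nonunit_mult[OF c3, of w] sq[OF iw] by simp
  have "(u*u - a) - (v*v - a) \<notin> ring_units" using local_diff[OF L s1 s2] .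
  moreover have "(u*u - a) - (v*v - a) = (u - v) * (u + v)" by (simp add: algebra_simps)
  ultimately have uv: "u - v \<notin> ring_units \<or> u + v \<notin> ring_units" using prod_nonunit by metis
  have "(u*u - a) - (w*w - a) \<notin> ring_units" using local_diff[OF L s1 s3] .
  moreover have "(u*u - a) - (w*w - a) = (u - w) * (u + w)" by (simp add: algebra_simps)
  ultimately have uw: "u - w \<notin> ring_units \<or> u + w \<notin> ring_units" using prod_nonunit by metis
  have "(u * ring_inv a) * (a * (ring_inv u + ring_inv v + ring_inv w)) \<notin> ring_units"
    using nonunit_mult[OF c4] by blast
  moreover have "(u * ring_inv a) * (a * (ring_inv u + ring_inv v + ring_inv w))
     = (a * ring_inv a) * (u * ring_inv u + u * ring_inv v + u * ring_inv w)"
    by (simp add: algebra_simps)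
  ultimately have X: "1 + u * ring_inv v + u * ring_inv w \<notin> ring_units" using ia iu by simp
  have pm: "\<exists>e. (e = 1 \<or> e = -1) \<and> u * ring_inv z - e \<notin> ring_units"
    if "z * ring_inv z = 1" "u - z \<notin> ring_units \<or> u + z \<notin> ring_units" for z
  proof (cases "u - z \<notin> ring_units")
    case True
    have "ring_inv z * (u - z) = u * ring_inv z - z * ring_inv z" by (simp add: algebra_simps)
    then have "u * ring_inv z - 1 \<notin> ring_units" using nonunit_mult[OF True, of "ring_inv z"] that(1) by simp
    then show ?thesis by blast
  next
    case False
    then have F: "u + z \<notin> ring_units" using that(2) by blast
    have "ring_inv z * (u + z) = u * ring_inv z - (-1) * (z * ring_inv z)" by (simp add: algebra_simps)
    then have "u * ring_inv z - (-1) \<notin> ring_units" using nonunit_mult[OF F, of "ring_inv z"] that(1) by simp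
    then show ?thesis by blast
  qed
  obtain e1 where e1: "e1 = 1 \<or> e1 = -1" "u * ring_inv v - e1 \<notin> ring_units" using pm[OF iv uv] by blast
  obtain e2 where e2: "e2 = 1 \<or> e2 = -1" "u * ring_inv w - e2 \<notin> ring_units" using pm[OF iw uw] by blast
  have "(1 + u * ring_inv v + u * ring_inv w) - (u * ring_inv v - e1) - (u * ring_inv w - e2) \<notin> ring_units"
    using local_diff[OF L local_diff[OF L X e1(2)] e2(2)] .
  moreover have "(1 + u * ring_inv v + u * ring_inv w) - (u * ring_inv v - e1) - (u * ring_inv w - e2) = 1 + e1 + e2"
    by (simp add: algebra_simps)
  ultimately have B: "1 + e1 + e2 \<notin> ring_units" by (simp only: not_False_eq_True)
  have "1 + e1 + e2 \<in> ring_units"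
    using e1(1) e2(1) three by (auto simp: one_unit neg_one_unit numeral_3_eq_3 add.assoc)
  then show False using B by simp
qed


lemma tau_one: "mult_character \<tau> \<Longrightarrow> \<tau> (1::'a::comm_ring_1) = 1"
proof -
  assume m: "mult_character \<tau>"
  have "\<tau> (1*1) = \<tau> 1 * \<tau> 1" using m one_unit[where 'a='a] unfolding mult_character_def by blast
  moreover have "\<tau> (1::'a) \<noteq> 0" using m one_unit[where 'a='a] unfolding mult_character_def by blast
  ultimately show ?thesis by simp
qed

lemma unit_cancel: "(e::'a::comm_ring_1) \<in> ring_units \<Longrightarrow> e * s = 0 \<Longrightarrow> s = 0"
proof -
  assume e: "e \<in> ring_units" "e * s = 0"
  have "s = (ring_inv e * e) * s" using ring_inv_unit[OF e(1)] by (simp add: mult.commute)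
  also have "\<dots> = ring_inv e * (e * s)" by (simp add: mult.assoc)
  finally show "s = 0" using e(2) by simp
qed

lemma exists_s:
  fixes \<tau> :: "'a::{comm_ring_1,finite} \<Rightarrow> complex"
  assumes L: "local_ring TYPE('a)" and nf: "\<not> is_field_ring TYPE('a)"
    and mc: "mult_character \<tau>" and np: "\<not> primitive_mult_character \<tau>"
  shows "\<exists>s::'a. s \<noteq> 0 \<and> s \<notin> ring_units \<and> (\<forall>r. \<tau> (1 + r*s) = 1) \<and> (\<forall>n. n \<notin> ring_units \<longrightarrow> n*s = 0)"
proof -
  define Ls where "Ls = {y::'a. y \<notin> ring_units \<and> (\<forall>r. \<tau> (1 + r*y) = 1)}"
  have t1: "\<tau> 1 = 1" by (rule tau_one[OF mc])
  have tmul: "\<tau> (x*y) = \<tau> x * \<tau> y" if "x \<in> ring_units" "y \<in> ring_units" for x y :: 'a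
    using mc that unfolding mult_character_def by blast
  have Ls_mult: "r' * y \<in> Ls" if "y \<in> Ls" for r' y
  proof -
    have "r' * y \<notin> ring_units" using that nonunit_mult unfolding Ls_def by blast
    moreover have "\<tau> (1 + r*(r'*y)) = 1" for r
      using that unfolding Ls_def by (simp add: mult.assoc[symmetric])
    ultimately show ?thesis unfolding Ls_def by blast
  qed
  have z0: "(0::'a) \<notin> ring_units"
  proof
    assume "(0::'a) \<in> ring_units"
    then have "(0::'a) = 1" unfolding ring_units_def by auto
    moreover from nf obtain x :: 'a where "x \<noteq> 0" unfolding is_field_ring_def by blast
    ultimately show False by (metis mult_1 mult_zero_left)
  qed
  have Ls0: "0 \<in> Ls" unfolding Ls_def using t1 z0 by auto
  have Ls_add: "y + z \<in> Ls" if y: "y \<in> Ls" and z: "z \<in> Ls" for y z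
  proof -
    have yn: "y \<notin> ring_units" and zn: "z \<notin> ring_units" using y z unfolding Ls_def by auto
    have "\<tau> (1 + r*(y+z)) = 1" for r
    proof -
      define e where "e = 1 + r*y"
      have eu: "e \<in> ring_units" unfolding e_def by (rule local_one_plus[OF L nonunit_mult[OF yn]])
      have te: "\<tau> e = 1" using y unfolding Ls_def e_def by blast
      define f where "f = 1 + (ring_inv e * r) * z"
      have fu: "f \<in> ring_units" unfolding f_def by (rule local_one_plus[OF L nonunit_mult[OF zn]])
      have tf: "\<tau> f = 1" using z unfolding Ls_def f_def by blast
      have "e * f = e + (e * ring_inv e) * r * z" unfolding f_def by (simp add: algebra_simps)
      also have "\<dots> = 1 + r*(y+z)" using ring_inv_unit[OF eu] unfolding e_def by (simp add: algebra_simps)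
      finally have "1 + r*(y+z) = e * f" by simp
      then show ?thesis using tmul[OF eu fu] te tf by simp
    qed
    moreover have "y + z \<notin> ring_units" by (rule local_add[OF L yn zn])
    ultimately show ?thesis unfolding Ls_def by blast
  qed
  have Ls_ideal: "is_ideal Ls" unfolding is_ideal_def using Ls0 Ls_add Ls_mult by blast
  have "\<exists>x. x \<in> Ls \<and> x \<noteq> 0"
  proof (cases "\<forall>u\<in>(ring_units::'a set). \<tau> u = 1")
    case True
    from nf obtain x :: 'a where x: "x \<noteq> 0" "x \<notin> ring_units" unfolding is_field_ring_def by blast
    have "\<tau> (1 + r*x) = 1" for r using True local_one_plus[OF L nonunit_mult[OF x(2)]] by blast
    then show ?thesis using x unfolding Ls_def by blast
  next
    case False
    have mi: "max_ideal = {x::'a. x \<notin> ring_units}" by (rule local_max_ideal[OF L])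
    have "conductor \<tau> = Ls"
    proof -
      let ?P = "\<lambda>I::'a set. is_ideal I \<and> I \<subseteq> max_ideal \<and> (\<forall>x\<in>I. \<tau> (1 + x) = 1)"
      have PL: "?P Ls" using Ls_ideal t1 unfolding mi Ls_def by (auto dest: spec[of _ 1])
      have maxL: "J \<subseteq> Ls" if "?P J" for J
      proof
        fix x assume x: "x \<in> J"
        have "r * x \<in> J" for r using that x unfolding is_ideal_def by blast
        then have "\<tau> (1 + r*x) = 1" for r using that by blast
        moreover have "x \<notin> ring_units" using that x unfolding mi by blast
        ultimately show "x \<in> Ls" unfolding Ls_def by blast
      qed
      have c: "conductor \<tau> = (THE I. ?P I \<and> (\<forall>J. ?P J \<longrightarrow> J \<subseteq> I))"
        unfolding conductor_def if_not_P[OF False] by (simp only: conj_assoc)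
      show "conductor \<tau> = Ls" unfolding c
      proof (rule the_equality)
        show "?P Ls \<and> (\<forall>J. ?P J \<longrightarrow> J \<subseteq> Ls)" using PL maxL by blast
        fix I assume "?P I \<and> (\<forall>J. ?P J \<longrightarrow> J \<subseteq> I)"
        then show "I = Ls" using PL maxL by blast
      qed
    qed
    moreover have "conductor \<tau> \<noteq> {0}" using np mc unfolding primitive_mult_character_def by blast
    ultimately have "Ls \<noteq> {0}" by simp
    then show ?thesis using Ls0 by blast
  qed
  then obtain x where x: "x \<in> Ls \<and> x \<noteq> 0" by blast
  obtain s where s: "s \<in> Ls \<and> s \<noteq> 0"
    and smin: "\<And>y. y \<in> Ls \<and> y \<noteq> 0 \<Longrightarrow> card (range (\<lambda>r. r*s)) \<le> card (range (\<lambda>r. r*y))"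
    using ex_has_least_nat[of "\<lambda>y. y \<in> Ls \<and> y \<noteq> 0" x "\<lambda>y. card (range (\<lambda>r. r*y))"] x by blast
  have ann: "n * s = 0" if n: "n \<notin> ring_units" for n
  proof (rule ccontr)
    assume ns: "n * s \<noteq> 0"
    have "n * s \<in> Ls" using Ls_mult s by blast
    then have le: "card (range (\<lambda>r. r*s)) \<le> card (range (\<lambda>r. r*(n*s)))" using smin ns by blast
    have sub: "range (\<lambda>r. r*(n*s)) \<subseteq> range (\<lambda>r. r*s)"
    proof
      fix y assume "y \<in> range (\<lambda>r. r*(n*s))"
      then obtain r where "y = r*(n*s)" by blast
      then have "y = (r*n)*s" by (simp add: mult.assoc)
      then show "y \<in> range (\<lambda>r. r*s)" by blast
    qed
    have "card (range (\<lambda>r. r*(n*s))) \<le> card (range (\<lambda>r. r*s))" using sub by (intro card_mono) simp_all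
    then have "range (\<lambda>r. r*(n*s)) = range (\<lambda>r. r*s)" using le sub by (intro card_subset_eq) simp_all
    moreover have "s \<in> range (\<lambda>r. r*s)" by (metis mult_1 rangeI)
    ultimately obtain r where r: "s = r*(n*s)" by blast
    have "(1 + (-(r*n))) * s = 0" using r by (simp add: algebra_simps)
    moreover have "1 + (-(r*n)) \<in> ring_units"
      by (rule local_one_plus[OF L nonunit_neg[OF nonunit_mult[OF n]]])
    ultimately have "s = 0" using unit_cancel by blast
    then show False using s by simp
  qed
  show ?thesis using s ann unfolding Ls_def by blast
qed


lemma psi_add: "additive_character \<psi> \<Longrightarrow> \<psi> (x + y) = \<psi> x * \<psi> y"
  unfolding additive_character_def by blast

lemma shift_sum_zero:
  fixes \<psi> :: "'a::{comm_ring_1,finite} \<Rightarrow> complex"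
  assumes ac: "additive_character \<psi>" and r0: "\<psi> (s*r0) \<noteq> 1"
  shows "(\<Sum>r\<in>UNIV. \<psi> (s*r)) = 0"
proof -
  let ?T = "\<Sum>r\<in>UNIV. \<psi> (s*r)"
  have "(\<Sum>r\<in>UNIV. \<psi> (s*(r+r0))) = ?T"
    by (rule sum.reindex_bij_witness[where i="\<lambda>r. r - r0" and j="\<lambda>r. r + r0"]) simp_all
  moreover have "(\<Sum>r\<in>UNIV. \<psi> (s*(r+r0))) = ?T * \<psi> (s*r0)"
    by (simp add: distrib_left psi_add[OF ac] sum_distrib_right)
  ultimately have "?T * (1 - \<psi> (s*r0)) = 0" by (simp add: algebra_simps)
  then show ?thesis using r0 by simp
qed

lemma unit_sum_zero:
  fixes \<psi> :: "'a::{comm_ring_1,finite} \<Rightarrow> complex"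
  assumes ac: "additive_character \<psi>" and r0: "\<psi> (s*r0) \<noteq> 1" and c: "c \<in> ring_units"
  shows "(\<Sum>r\<in>UNIV. \<psi> (s*(r*c))) = 0"
proof -
  have ic: "c * ring_inv c = 1" by (rule ring_inv_unit[OF c])
  have "(\<Sum>r\<in>UNIV. \<psi> (s*(r*c))) = (\<Sum>r\<in>UNIV. \<psi> (s*r))"
  proof (rule sum.reindex_bij_witness[where i="\<lambda>r. r * ring_inv c" and j="\<lambda>r. r * c"])
    fix a :: 'a show "a * c * ring_inv c = a" using ic by (simp add: mult.assoc)
    have "a * ring_inv c * c = a * (c * ring_inv c)" by (simp only: ac_simps)
    then show "a * ring_inv c * c = a" using ic by simp
  qed simp_all
  also have "\<dots> = 0" by (rule shift_sum_zero[OF ac r0])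
  finally show ?thesis .
qed

lemma sum4_prod:
  fixes A B C D :: "'a::finite \<Rightarrow> complex"
  shows "(\<Sum>p\<in>UNIV. (case p of (t,x,y,z) \<Rightarrow> A t * B x * C y * D z)) = sum A UNIV * sum B UNIV * sum C UNIV * sum D UNIV"
proof -
  have U: "(UNIV :: ('a\<times>'a\<times>'a\<times>'a) set) = UNIV \<times> UNIV \<times> UNIV \<times> UNIV" by simp
  have "sum A UNIV * (sum B UNIV * (sum C UNIV * sum D UNIV)) = (\<Sum>t\<in>UNIV. \<Sum>x\<in>UNIV. \<Sum>y\<in>UNIV. \<Sum>z\<in>UNIV. A t*(B x*(C y*D z)))"
    by (simp only: sum_product, simp only: sum_distrib_left)
  moreover have "(\<Sum>p\<in>UNIV. (case p of (t,x,y,z) \<Rightarrow> A t * B x * C y * D z)) = (\<Sum>t\<in>UNIV. \<Sum>x\<in>UNIV. \<Sum>y\<in>UNIV. \<Sum>z\<in>UNIV. A t*(B x*(C y*D z)))"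
    unfolding U sum.cartesian_product' by (simp add: mult.assoc)
  ultimately show ?thesis by (simp add: mult.assoc)
qed

lemma sum4:
  "(\<Sum>q\<in>A\<times>B\<times>C\<times>D. f q) = (\<Sum>a\<in>A. \<Sum>b\<in>B. \<Sum>c\<in>C. \<Sum>d\<in>D. f (a,b,c,d))"
  by (simp add: sum.cartesian_product')

lemma cube_sum: "(sum g A)^3 = (\<Sum>u\<in>A. \<Sum>v\<in>A. \<Sum>w\<in>A. g u * g v * (g w :: complex))"
proof -
  have "sum g A * (sum g A * sum g A) = (\<Sum>u\<in>A. \<Sum>v\<in>A. \<Sum>w\<in>A. g u * (g v * g w))"
    by (simp only: sum_product, simp only: sum_distrib_left)
  then show ?thesis by (simp add: power3_eq_cube mult.assoc)
qed


theorem mainTheorem4: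
  fixes \<psi> \<tau> :: "'a::{comm_ring_1, finite} \<Rightarrow> complex"
  assumes "local_ring TYPE('a)"
    and "frobenius_ring TYPE('a)"
    and "\<not> is_field_ring TYPE('a)"
    and "odd (residue_char TYPE('a))"
    and "(3::'a) \<in> ring_units"
    and "primitive_additive_character \<psi>"
    and "mult_character \<tau>"
    and "\<not> primitive_mult_character \<tau>"
  shows "(\<Sum>a\<in>ring_units. (kloosterman \<tau> \<psi> a) ^ 3) = 0"
proof -
  note L = assms(1) and three = assms(5) and pac = assms(6) and mc = assms(7)
  obtain s :: 'a where s0: "s \<noteq> 0" and sn: "s \<notin> ring_units" and ts: "\<And>r. \<tau> (1 + r*s) = 1"
    and ann: "\<And>n. n \<notin> ring_units \<Longrightarrow> n*s = 0"
    using exists_s[OF L assms(3) mc assms(8)] by blast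
  have ss: "s*s = 0" using ann[OF sn] .
  have ac: "additive_character \<psi>" using pac unfolding primitive_additive_character_def by blast
  have tmul: "\<tau> (x*y) = \<tau> x * \<tau> y" if "x \<in> ring_units" "y \<in> ring_units" for x y :: 'a
    using mc that unfolding mult_character_def by blast
  obtain r0 where r0: "\<psi> (s*r0) \<noteq> 1"
  proof -
    let ?I = "range (\<lambda>r. r*s)"
    have "is_ideal ?I" unfolding is_ideal_def
    proof (intro conjI ballI allI)
      have "0 = 0 * s" by simp
      then show "0 \<in> ?I" by blast
      fix a b assume "a \<in> ?I" "b \<in> ?I"
      then obtain r r' where "a = r*s" "b = r'*s" by blast
      then have "a + b = (r+r')*s" by (simp add: distrib_right)
      then show "a + b \<in> ?I" by blast
    next
      fix r a assume "a \<in> ?I"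
      then obtain r' where "a = r'*s" by blast
      then have "r*a = (r*r')*s" by (simp add: mult.assoc)
      then show "r * a \<in> ?I" by blast
    qed
    moreover have "s \<in> ?I" by (metis mult_1 rangeI)
    ultimately have "\<not> (\<forall>x\<in>?I. \<psi> x = 1)" using pac s0 unfolding primitive_additive_character_def by blast
    then obtain r where "\<psi> (r*s) \<noteq> 1" by blast
    then show ?thesis using that[of r] by (simp add: mult.commute)
  qed
  define e where "e r = 1 + r*s" for r
  have eu: "e r \<in> ring_units" for r unfolding e_def by (rule local_one_plus[OF L nonunit_mult[OF sn]])
  have ee: "e r * e (-r) = 1" for r
  proof -
    have "e r * e (-r) = 1 - (r*r)*(s*s)" unfolding e_def by (simp add: algebra_simps)
    then show ?thesis using ss by simp
  qed
  have ee': "e (-r) * e r = 1" for r using ee[of "-r"] by simp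
  have te: "\<tau> (e r) = 1" for r unfolding e_def by (rule ts)
  have eK: "b * e r * e (-r) = b" "b * e (-r) * e r = b" for b r
    using ee[of r] ee'[of r] by (simp_all add: mult.assoc)
  define g where "g a u = \<tau> u * \<psi> (u + a * ring_inv u)" for a u
  define Ph where "Ph c r = \<psi> (s*(r*c))" for c r
  have gact: "g (a * e t) (u * e x) = g a u * (Ph (u - a * ring_inv u) x * Ph (a * ring_inv u) t)"
    if a: "a \<in> ring_units" and u: "u \<in> ring_units" for a u t x
  proof -
    have iu: "u * ring_inv u = 1" by (rule ring_inv_unit[OF u])
    have inv: "ring_inv (u * e x) = ring_inv u * e (-x)"
    proof (rule ring_inv_eq)
      have "u * e x * (ring_inv u * e (-x)) = (u * ring_inv u) * (e x * e (-x))" by (simp only: ac_simps)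
      then show "u * e x * (ring_inv u * e (-x)) = 1" using iu ee by simp
    qed
    have tau: "\<tau> (u * e x) = \<tau> u" using tmul[OF u eu] te by simp
    have p1: "e t * e (-x) = 1 + t*s - x*s"
    proof -
      have "e t * e (-x) = 1 + t*s - x*s - (t*x)*(s*s)" unfolding e_def by (simp add: algebra_simps)
      then show ?thesis using ss by simp
    qed
    have "u * e x + (a * e t) * (ring_inv u * e (-x)) = u * e x + (a * ring_inv u) * (e t * e (-x))"
      by (simp only: ac_simps)
    also have "\<dots> = (u + a * ring_inv u) + (s*(x*(u - a * ring_inv u)) + s*(t*(a * ring_inv u)))"
      unfolding p1 unfolding e_def by (simp add: algebra_simps)
    finally have arg: "u * e x + (a * e t) * ring_inv (u * e x) = (u + a * ring_inv u) + (s*(x*(u - a * ring_inv u)) + s*(t*(a * ring_inv u)))"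
      unfolding inv .
    show ?thesis unfolding g_def Ph_def tau arg psi_add[OF ac] by (simp add: mult.assoc)
  qed
  define A4 where "A4 = (ring_units::'a set) \<times> (ring_units::'a set) \<times> (ring_units::'a set) \<times> (ring_units::'a set)"
  define G where "G q = (case q of (a,u,v,w) \<Rightarrow> g a u * g a v * g a w)" for q
  define act where "act p q = (case p of (t,x,y,z) \<Rightarrow> case q of (a,u,v,w) \<Rightarrow> (a * e t, u * e x, v * e y, w * e z))" for p q :: "'a\<times>'a\<times>'a\<times>'a"
  have Gact: "G (act (t,x,y,z) (a,u,v,w)) = G (a,u,v,w) *
      (Ph (a * (ring_inv u + ring_inv v + ring_inv w)) t * Ph (u - a * ring_inv u) x * Ph (v - a * ring_inv v) y * Ph (w - a * ring_inv w) z)"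
    if "a \<in> ring_units" "u \<in> ring_units" "v \<in> ring_units" "w \<in> ring_units" for a u v w t x y z
  proof -
    have "Ph (a * (ring_inv u + ring_inv v + ring_inv w)) t = Ph (a * ring_inv u) t * Ph (a * ring_inv v) t * Ph (a * ring_inv w) t"
      unfolding Ph_def by (simp add: algebra_simps psi_add[OF ac])
    then show ?thesis unfolding act_def G_def using gact that by (simp add: ac_simps)
  qed
  have inner: "(\<Sum>p\<in>UNIV. G (act p q)) = 0" if q: "q \<in> A4" for q
  proof -
    obtain a u v w where qq: "q = (a,u,v,w)" by (cases q) auto
    have U: "a \<in> ring_units" "u \<in> ring_units" "v \<in> ring_units" "w \<in> ring_units" using q unfolding qq A4_def by auto
    let ?c4 = "a * (ring_inv u + ring_inv v + ring_inv w)" and ?c1 = "u - a * ring_inv u"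
      and ?c2 = "v - a * ring_inv v" and ?c3 = "w - a * ring_inv w"
    have "(\<Sum>p\<in>UNIV. G (act p q)) = (\<Sum>p\<in>UNIV. G q * (case p of (t,x,y,z) \<Rightarrow> Ph ?c4 t * Ph ?c1 x * Ph ?c2 y * Ph ?c3 z))"
    proof (rule sum.cong)
      fix p :: "'a\<times>'a\<times>'a\<times>'a"
      obtain t x y z where "p = (t,x,y,z)" by (cases p) auto
      then show "G (act p q) = G q * (case p of (t,x,y,z) \<Rightarrow> Ph ?c4 t * Ph ?c1 x * Ph ?c2 y * Ph ?c3 z)"
        using Gact[OF U] unfolding qq by simp
    qed simp
    also have "\<dots> = G q * (sum (Ph ?c4) UNIV * sum (Ph ?c1) UNIV * sum (Ph ?c2) UNIV * sum (Ph ?c3) UNIV)"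
      by (simp add: sum_distrib_left[symmetric] sum4_prod)
    also have "\<dots> = 0"
    proof -
      have z: "sum (Ph c) UNIV = 0" if "c \<in> ring_units" for c
        unfolding Ph_def by (rule unit_sum_zero[OF ac r0 that])
      show ?thesis using key_alg[OF L three U] z by auto
    qed
    finally show ?thesis .
  qed
  have inv_act: "(\<Sum>q\<in>A4. G (act p q)) = (\<Sum>q\<in>A4. G q)" for p
  proof -
    obtain t x y z where pp: "p = (t,x,y,z)" by (cases p) auto
    show ?thesis unfolding pp
    proof (rule sum.reindex_bij_witness[where i="act (-t,-x,-y,-z)" and j="act (t,x,y,z)"])
      fix q assume "q \<in> A4"
      then obtain a u v w where qq: "q = (a,u,v,w)" and U: "a \<in> ring_units" "u \<in> ring_units" "v \<in> ring_units" "w \<in> ring_units"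
        unfolding A4_def by auto
      show "act (-t,-x,-y,-z) (act (t,x,y,z) q) = q" unfolding qq act_def by (simp add: eK)
      show "act (t,x,y,z) (act (-t,-x,-y,-z) q) = q" unfolding qq act_def by (simp add: eK)
      show "act (t,x,y,z) q \<in> A4" unfolding qq act_def A4_def using U eu unit_mult by auto
      show "act (-t,-x,-y,-z) q \<in> A4" unfolding qq act_def A4_def using U eu unit_mult by auto
    qed simp
  qed
  have S: "(\<Sum>a\<in>ring_units. (kloosterman \<tau> \<psi> a) ^ 3) = (\<Sum>q\<in>A4. G q)"
    unfolding A4_def sum4 G_def kloosterman_def g_def[symmetric] cube_sum by simp
  have "of_nat (card (UNIV::('a\<times>'a\<times>'a\<times>'a) set)) * (\<Sum>q\<in>A4. G q) = (\<Sum>p\<in>UNIV. \<Sum>q\<in>A4. G (act p q))"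
    using inv_act by simp
  also have "\<dots> = (\<Sum>q\<in>A4. \<Sum>p\<in>UNIV. G (act p q))" by (rule sum.swap)
  also have "\<dots> = 0" using inner by simp
  finally have "of_nat (card (UNIV::('a\<times>'a\<times>'a\<times>'a) set)) * (\<Sum>q\<in>A4. G q) = 0" .
  moreover have "card (UNIV::('a\<times>'a\<times>'a\<times>'a) set) \<noteq> 0" by simp
  ultimately show ?thesis unfolding S by simp
qed
end
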